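(* Let $i,j\in I$, $c_1:=-\langle h_i,\alpha_j\rangle$, $c_2:=-\langle h_j,\alpha_i\rangle$, and suppose $c_1c_2=2$. Define $\phi^{(2)}_{ij}:B_i\otimes B_j\otimes B_i\otimes B_j\to B_j\otimes B_i\otimes B_j\otimes B_i$ by $\phi^{(2)}_{ij}((x)_i\otimes(y)_j\otimes(z)_i\otimes(w)_j)=(X)_j\otimes(Y)_i\otimes(Z)_j\otimes(W)_i$, where $$X=w+(-c_2x+y-w+c_2(x-c_1y+z)_+)_+,\qquad Y=x+c_1w+(-x+z-c_1w+(x-c_1y+z)_+)_+,$$ $$Z=y-(-c_2x+y-w+c_2(x-c_1y+z)_+)_+,\qquad W=z-c_1w-(-x+z-c_1w+(x-c_1y+z)_+)_+.$$ Then $\phi^{(2)}_{ij}$ is an isomorphism of crystals.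
   Context: Let $\mathfrak g$ be a symmetrizable Kac–Moody algebra with finite index set $I$, weight lattice $P$, simple roots $\alpha_i$ and simple coroots $h_i$ ($i\in I$), with pairing $\langle\cdot,\cdot\rangle$. A crystal is a set $B$ with maps $wt:B\to P$, $\varepsilon_i,\varphi_i:B\to\mathbb Z\sqcup\{-\infty\}$, $\tilde e_i,\tilde f_i:B\sqcup\{0\}\to B\sqcup\{0\}$ ($i\in I$) such that $\varphi_i(b)=\varepsilon_i(b)+\langle h_i,wt(b)\rangle$; $wt(\tilde e_ib)=wt(b)+\alpha_i$ if $\tilde e_ib\in B$; $wt(\tilde f_ib)=wt(b)-\alpha_i$ if $\tilde f_ib\in B$; $\tilde e_ib_2=b_1\iff\tilde f_ib_1=b_2$; $\varepsilon_i(b)=-\infty$ implies $\tilde e_ib=\tilde f_ib=0$; $\tilde e_i0=\tilde f_i0=0$. A strict morphism $\psi:B_1\to B_2$ is a map $B_1\sqcup\{0\}\to B_2\sqcup\{0\}$ with $\psi(0)=0$, preserving $wt,\varepsilon_i,\varphi_i$ on elements $b$ with $\psi(b)\neq0$, and commuting with all $\tilde e_i,\tilde f_i$; an isomorphism of crystals is a bijective strict morphism. The tensor product $B_1\otimes B_2=\{b_1\otimes b_2\}$ has $wt(b_1\otimes b_2)=wt(b_1)+wt(b_2)$, $\varepsilon_i(b_1\otimes b_2)=\max(\varepsilon_i(b_1),\varepsilon_i(b_2)-\langle h_i,wt(b_1)\rangle)$, $\varphi_i(b_1\otimes b_2)=\max(\varphi_i(b_2),\varphi_i(b_1)+\langle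 h_i,wt(b_2)\rangle)$, $\tilde e_i(b_1\otimes b_2)=\tilde e_ib_1\otimes b_2$ if $\varphi_i(b_1)\ge\varepsilon_i(b_2)$ and $b_1\otimes\tilde e_ib_2$ otherwise, $\tilde f_i(b_1\otimes b_2)=\tilde f_ib_1\otimes b_2$ if $\varphi_i(b_1)>\varepsilon_i(b_2)$ and $b_1\otimes\tilde f_ib_2$ otherwise (with $b\otimes0=0\otimes b=0$); it is associative. For $i\in I$, $B_i=\{(x)_i: x\in\mathbb Z\}$ is the crystal with $wt((x)_i)=x\alpha_i$, $\varepsilon_i((x)_i)=-x$, $\varphi_i((x)_i)=x$, $\varepsilon_j((x)_i)=\varphi_j((x)_i)=-\infty$ for $j\ne i$, $\tilde e_j(x)_i=\delta_{ij}(x+1)_i$, $\tilde f_j(x)_i=\delta_{ij}(x-1)_i$ (where $\delta_{ij}\cdot(\ )=0$ for $j\neq i$). For $x\in\mathbb Q$, $x_+:=\max(x,0)$. *)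

theory Defs
  imports Complex_Main "HOL-Library.Extended_Real"
begin

text \<open>Kac-Moody datum: index set I (finite), generalized Cartan matrix A with
  A k l = <h_k, alpha_l>, simple roots alpha in the real vector space 'w (dual
  Cartan subalgebra), coroots given by the linear functionals hpair k.\<close>

definition km_datum ::
  "'i set \<Rightarrow> ('i \<Rightarrow> 'i \<Rightarrow> int) \<Rightarrow> ('i \<Rightarrow> 'w::real_vector) \<Rightarrow> ('i \<Rightarrow> 'w \<Rightarrow> real) \<Rightarrow> bool" where
  "km_datum I A alpha hpair \<longleftrightarrow>
     finite I
   \<and> (\<forall>k\<in>I. A k k = 2)
   \<and> (\<forall>k\<in>I. \<forall>l\<in>I. k \<noteq> l \<longrightarrow> A k l \<le> 0)
   \<and> (\<forall>k\<in>I. \<forall>l\<in>I. A k l = 0 \<longleftrightarrow> A l k = 0)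
   \<and> (\<exists>d::'i \<Rightarrow> real. (\<forall>k\<in>I. d k > 0) \<and> (\<forall>k\<in>I. \<forall>l\<in>I. d k * A k l = d l * A l k))
   \<and> (\<forall>k\<in>I. linear (hpair k))
   \<and> (\<forall>k\<in>I. \<forall>l\<in>I. hpair k (alpha l) = of_int (A k l))
   \<and> (\<forall>c::'i \<Rightarrow> real. (\<Sum>k\<in>I. c k *\<^sub>R alpha k) = 0 \<longrightarrow> (\<forall>k\<in>I. c k = 0))"

text \<open>A crystal structure on the type 'b. The values of eps/phi lie in
  Z with -infinity (as ereal); e and f return None for the element 0.\<close>

record ('b, 'w, 'i) crystal =
  cwt  :: "'b \<Rightarrow> 'w"
  ceps :: "'i \<Rightarrow> 'b \<Rightarrow> ereal"
  cphi :: "'i \<Rightarrow> 'b \<Rightarrow> ereal"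
  ce   :: "'i \<Rightarrow> 'b \<Rightarrow> 'b option"
  cf   :: "'i \<Rightarrow> 'b \<Rightarrow> 'b option"

definition tensor ::
  "('i \<Rightarrow> 'w::real_vector \<Rightarrow> real) \<Rightarrow> ('b1, 'w, 'i) crystal \<Rightarrow> ('b2, 'w, 'i) crystal
     \<Rightarrow> ('b1 \<times> 'b2, 'w, 'i) crystal" where
  "tensor hpair C1 C2 =
    \<lparr> cwt = (\<lambda>(b1, b2). cwt C1 b1 + cwt C2 b2),
      ceps = (\<lambda>k (b1, b2). max (ceps C1 k b1) (ceps C2 k b2 - ereal (hpair k (cwt C1 b1)))),
      cphi = (\<lambda>k (b1, b2). max (cphi C2 k b2) (cphi C1 k b1 + ereal (hpair k (cwt C2 b2)))),
      ce = (\<lambda>k (b1, b2). if cphi C1 k b1 \<ge> ceps C2 k b2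
                         then map_option (\<lambda>b. (b, b2)) (ce C1 k b1)
                         else map_option (\<lambda>b. (b1, b)) (ce C2 k b2)),
      cf = (\<lambda>k (b1, b2). if cphi C1 k b1 > ceps C2 k b2
                         then map_option (\<lambda>b. (b, b2)) (cf C1 k b1)
                         else map_option (\<lambda>b. (b1, b)) (cf C2 k b2)) \<rparr>"

text \<open>The crystal B_i; the element (x)_i is represented by the integer x.\<close>

definition Bcr :: "('i \<Rightarrow> 'w::real_vector) \<Rightarrow> 'i \<Rightarrow> (int, 'w, 'i) crystal" where
  "Bcr alpha i =
    \<lparr> cwt = (\<lambda>x. of_int x *\<^sub>R alpha i),
      ceps = (\<lambda>k x. if k = i then ereal (of_int (- x)) else - \<infinity>),
      cphi = (\<lambda>k x. if k = i then ereal (of_int x) else - \<infinity>),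
      ce = (\<lambda>k x. if k = i then Some (x + 1) else None),
      cf = (\<lambda>k x. if k = i then Some (x - 1) else None) \<rparr>"

text \<open>Strict morphisms B1 -> B2: psi b = None means psi(b) = 0; psi(0) = 0 is built in.\<close>

definition strict_morphism ::
  "'i set \<Rightarrow> ('b1, 'w, 'i) crystal \<Rightarrow> ('b2, 'w, 'i) crystal \<Rightarrow> ('b1 \<Rightarrow> 'b2 option) \<Rightarrow> bool" where
  "strict_morphism I C1 C2 psi \<longleftrightarrow>
     (\<forall>b b'. psi b = Some b' \<longrightarrow>
        cwt C2 b' = cwt C1 b \<and>
        (\<forall>k\<in>I. ceps C2 k b' = ceps C1 k b \<and> cphi C2 k b' = cphi C1 k b))
   \<and> (\<forall>k\<in>I. \<forall>b. Option.bind (ce C1 k b) psi = Option.bind (psi b) (ce C2 k)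
              \<and> Option.bind (cf C1 k b) psi = Option.bind (psi b) (cf C2 k))"

definition crystal_iso ::
  "'i set \<Rightarrow> ('b1, 'w, 'i) crystal \<Rightarrow> ('b2, 'w, 'i) crystal \<Rightarrow> ('b1 \<Rightarrow> 'b2 option) \<Rightarrow> bool" where
  "crystal_iso I C1 C2 psi \<longleftrightarrow>
     strict_morphism I C1 C2 psi \<and> bij (\<lambda>x. case x of None \<Rightarrow> None | Some b \<Rightarrow> psi b)"

definition pos_part :: "int \<Rightarrow> int" where
  "pos_part x = max x 0"

text \<open>The map phi^(2)_ij on ((B_i (x) B_j) (x) B_i) (x) B_j (tensor is associative).\<close>

definition phi2 :: "int \<Rightarrow> int \<Rightarrow> ((int \<times> int) \<times> int) \<times> int \<Rightarrow> ((int \<times> int) \<times> int) \<times> int" where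
  "phi2 c1 c2 = (\<lambda>(((x, y), z), w).
     let X = w + pos_part (- c2 * x + y - w + c2 * pos_part (x - c1 * y + z));
         Y = x + c1 * w + pos_part (- x + z - c1 * w + pos_part (x - c1 * y + z));
         Z = y - pos_part (- c2 * x + y - w + c2 * pos_part (x - c1 * y + z));
         W = z - c1 * w - pos_part (- x + z - c1 * w + pos_part (x - c1 * y + z))
     in (((X, Y), Z), W))"

end

theory Submission
  imports Defs
begin

lemma gen:
  fixes alpha :: "'i \<Rightarrow> 'w::real_vector" and hpair :: "'i \<Rightarrow> 'w \<Rightarrow> real"
  assumes lp: "linear (hpair p)" and lq: "linear (hpair q)" and pq: "p \<noteq> q"
  and Hpp: "hpair p (alpha p) = 2" and Hpq: "hpair p (alpha q) = of_int a"
  and Hqp: "hpair q (alpha p) = of_int b" and Hqq: "hpair q (alpha q) = 2"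
  defines "T \<equiv> tensor hpair (tensor hpair (tensor hpair (Bcr alpha p) (Bcr alpha q)) (Bcr alpha p)) (Bcr alpha q)"
  shows "cwt T (((x,y),z),w) = of_int (x+z) *\<^sub>R alpha p + of_int (y+w) *\<^sub>R alpha q"
    "ceps T p (((x,y),z),w) = ereal (of_int (max (-x) (-z-2*x-a*y)))"
    "cphi T p (((x,y),z),w) = ereal (of_int (max z (x+a*y+2*z) + a*w))"
    "ce T p (((x,y),z),w) = Some (if x+a*y+z \<ge> 0 then (((x+1,y),z),w) else (((x,y),z+1),w))"
    "cf T p (((x,y),z),w) = Some (if x+a*y+z > 0 then (((x-1,y),z),w) else (((x,y),z-1),w))"
    "ceps T q (((x,y),z),w) = ereal (of_int (max (-y-b*x) (-w-b*x-2*y-b*z)))"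
    "cphi T q (((x,y),z),w) = ereal (of_int (max w (y+b*z+2*w)))"
    "ce T q (((x,y),z),w) = Some (if y+b*z+w \<ge> 0 then (((x,y+1),z),w) else (((x,y),z),w+1))"
    "cf T q (((x,y),z),w) = Some (if y+b*z+w > 0 then (((x,y-1),z),w) else (((x,y),z),w-1))"
    "k \<noteq> p \<Longrightarrow> k \<noteq> q \<Longrightarrow> ceps T k v = -\<infinity>"
    "k \<noteq> p \<Longrightarrow> k \<noteq> q \<Longrightarrow> cphi T k v = -\<infinity>"
    "k \<noteq> p \<Longrightarrow> k \<noteq> q \<Longrightarrow> ce T k v = None"
    "k \<noteq> p \<Longrightarrow> k \<noteq> q \<Longrightarrow> cf T k v = None"
proof -
  have two: "(2::real) * of_int u = of_int (2*u)" "of_int u * (2::real) = of_int (u*2)" for u by simp_all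
  note S = T_def tensor_def Bcr_def pq pq[symmetric] linear_add[OF lp] linear_scale[OF lp]
    linear_add[OF lq] linear_scale[OF lq] Hpp Hpq Hqp Hqq
  show "cwt T (((x,y),z),w) = of_int (x+z) *\<^sub>R alpha p + of_int (y+w) *\<^sub>R alpha q"
    by (simp add: T_def tensor_def Bcr_def algebra_simps)
  show "ceps T p (((x,y),z),w) = ereal (of_int (max (-x) (-z-2*x-a*y)))"
    by (simp add: S max_def algebra_simps two del: of_int_mult of_int_add of_int_minus of_int_diff flip: of_int_mult of_int_add of_int_minus of_int_diff)
  show "cphi T p (((x,y),z),w) = ereal (of_int (max z (x+a*y+2*z) + a*w))"
    by (simp add: S max_def algebra_simps two del: of_int_mult of_int_add of_int_minus of_int_diff flip: of_int_mult of_int_add of_int_minus of_int_diff)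
  show "ce T p (((x,y),z),w) = Some (if x+a*y+z \<ge> 0 then (((x+1,y),z),w) else (((x,y),z+1),w))"
    by (simp add: S algebra_simps two del: of_int_mult of_int_add of_int_minus of_int_diff flip: of_int_mult of_int_add of_int_minus of_int_diff)
  show "cf T p (((x,y),z),w) = Some (if x+a*y+z > 0 then (((x-1,y),z),w) else (((x,y),z-1),w))"
    apply (simp add: S algebra_simps two del: of_int_mult of_int_add of_int_minus of_int_diff flip: of_int_mult of_int_add of_int_minus of_int_diff)
    by (metis diff_add_cancel)
  show "ceps T q (((x,y),z),w) = ereal (of_int (max (-y-b*x) (-w-b*x-2*y-b*z)))"
    by (simp add: S max_def algebra_simps two del: of_int_mult of_int_add of_int_minus of_int_diff flip: of_int_mult of_int_add of_int_minus of_int_diff)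
  show "cphi T q (((x,y),z),w) = ereal (of_int (max w (y+b*z+2*w)))"
    by (simp add: S max_def algebra_simps two del: of_int_mult of_int_add of_int_minus of_int_diff flip: of_int_mult of_int_add of_int_minus of_int_diff)
  show "ce T q (((x,y),z),w) = Some (if y+b*z+w \<ge> 0 then (((x,y+1),z),w) else (((x,y),z),w+1))"
    by (simp add: S algebra_simps two del: of_int_mult of_int_add of_int_minus of_int_diff flip: of_int_mult of_int_add of_int_minus of_int_diff)
  show "cf T q (((x,y),z),w) = Some (if y+b*z+w > 0 then (((x,y-1),z),w) else (((x,y),z),w-1))"
    by (simp add: S algebra_simps two del: of_int_mult of_int_add of_int_minus of_int_diff flip: of_int_mult of_int_add of_int_minus of_int_diff)
  assume k: "k \<noteq> p" "k \<noteq> q"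
  obtain v1 v2 v3 v4 where v: "v = (((v1,v2),v3),v4)" by (metis prod.exhaust)
  show "ceps T k v = -\<infinity>" "cphi T k v = -\<infinity>" "ce T k v = None" "cf T k v = None"
    using k by (simp_all add: S v)
qed


lemma core0:
  fixes x y z w a b :: int
  assumes ab: "(a,b) \<in> {(-1,-2),(-2,-1)}"
  shows "case phi2 (-a) (-b) (((x,y),z),w) of (((X,Y),Z),W) \<Rightarrow> X+Z = y+w"
proof -
  have 1: "case phi2 (-(-1)) (-(-2)) (((x,y),z),w) of (((X,Y),Z),W) \<Rightarrow> X+Z = y+w"
    unfolding phi2_def Let_def pos_part_def max_def
      using [[smt_timeout=300]]
      by (simp only: prod.case split_def fst_conv snd_conv prod_eq_iff if_distrib[of fst] if_distrib[of snd] minus_minus mult_minus_left mult_1 split del: if_split; smt (z3))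
  have 2: "case phi2 (-(-2)) (-(-1)) (((x,y),z),w) of (((X,Y),Z),W) \<Rightarrow> X+Z = y+w"
    unfolding phi2_def Let_def pos_part_def max_def
      using [[smt_timeout=300]]
      by (simp only: prod.case split_def fst_conv snd_conv prod_eq_iff if_distrib[of fst] if_distrib[of snd] minus_minus mult_minus_left mult_1 split del: if_split; smt (z3))
  show ?thesis using ab 1 2 by auto
qed

lemma core1:
  fixes x y z w a b :: int
  assumes ab: "(a,b) \<in> {(-1,-2),(-2,-1)}"
  shows "case phi2 (-a) (-b) (((x,y),z),w) of (((X,Y),Z),W) \<Rightarrow> Y+W = x+z"
proof -
  have 1: "case phi2 (-(-1)) (-(-2)) (((x,y),z),w) of (((X,Y),Z),W) \<Rightarrow> Y+W = x+z"
    unfolding phi2_def Let_def pos_part_def max_def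
      using [[smt_timeout=300]]
      by (simp only: prod.case split_def fst_conv snd_conv prod_eq_iff if_distrib[of fst] if_distrib[of snd] minus_minus mult_minus_left mult_1 split del: if_split; smt (z3))
  have 2: "case phi2 (-(-2)) (-(-1)) (((x,y),z),w) of (((X,Y),Z),W) \<Rightarrow> Y+W = x+z"
    unfolding phi2_def Let_def pos_part_def max_def
      using [[smt_timeout=300]]
      by (simp only: prod.case split_def fst_conv snd_conv prod_eq_iff if_distrib[of fst] if_distrib[of snd] minus_minus mult_minus_left mult_1 split del: if_split; smt (z3))
  show ?thesis using ab 1 2 by auto
qed

lemma core3:
  fixes x y z w a b :: int
  assumes ab: "(a,b) \<in> {(-1,-2),(-2,-1)}"
  shows "case phi2 (-a) (-b) (((x,y),z),w) of (((X,Y),Z),W) \<Rightarrow> max Z (X+b*Y+2*Z) + b*W = max w (y+b*z+2*w)"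
proof -
  have 1: "case phi2 (-(-1)) (-(-2)) (((x,y),z),w) of (((X,Y),Z),W) \<Rightarrow> max Z (X+(-2)*Y+2*Z) + (-2)*W = max w (y+(-2)*z+2*w)"
    unfolding phi2_def Let_def pos_part_def max_def
      using [[smt_timeout=300]]
      by (simp only: prod.case split_def fst_conv snd_conv prod_eq_iff if_distrib[of fst] if_distrib[of snd] minus_minus mult_minus_left mult_1 split del: if_split; smt (z3))
  have 2: "case phi2 (-(-2)) (-(-1)) (((x,y),z),w) of (((X,Y),Z),W) \<Rightarrow> max Z (X+(-1)*Y+2*Z) + (-1)*W = max w (y+(-1)*z+2*w)"
    unfolding phi2_def Let_def pos_part_def max_def
      using [[smt_timeout=300]]
      by (simp only: prod.case split_def fst_conv snd_conv prod_eq_iff if_distrib[of fst] if_distrib[of snd] minus_minus mult_minus_left mult_1 split del: if_split; smt (z3))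
  show ?thesis using ab 1 2 by auto
qed

lemma core2:
  fixes x y z w a b :: int
  assumes ab: "(a,b) \<in> {(-1,-2),(-2,-1)}"
  shows "case phi2 (-a) (-b) (((x,y),z),w) of (((X,Y),Z),W) \<Rightarrow> max (-X) (-Z-2*X-b*Y) = max (-y-b*x) (-w-b*x-2*y-b*z)"
proof -
  obtain X Y Z W where P: "phi2 (-a) (-b) (((x,y),z),w) = (((X,Y),Z),W)" by (metis prod.exhaust)
  have h0: "X+Z = y+w" using core0[OF ab, where x=x and y=y and z=z and w=w] by (simp add: P)
  have h1: "Y+W = x+z" using core1[OF ab, where x=x and y=y and z=z and w=w] by (simp add: P)
  have h3: "max Z (X+b*Y+2*Z) + b*W = max w (y+b*z+2*w)" using core3[OF ab, where x=x and y=y and z=z and w=w] by (simp add: P)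
  show ?thesis using ab h0 h1 h3 by (auto simp: P max_def split: if_splits)
qed

lemma core5:
  fixes x y z w a b :: int
  assumes ab: "(a,b) \<in> {(-1,-2),(-2,-1)}"
  shows "case phi2 (-a) (-b) (((x,y),z),w) of (((X,Y),Z),W) \<Rightarrow> max W (Y+a*Z+2*W) = max z (x+a*y+2*z) + a*w"
proof -
  have 1: "case phi2 (-(-1)) (-(-2)) (((x,y),z),w) of (((X,Y),Z),W) \<Rightarrow> max W (Y+(-1)*Z+2*W) = max z (x+(-1)*y+2*z) + (-1)*w"
    unfolding phi2_def Let_def pos_part_def max_def
      using [[smt_timeout=300]]
      by (simp only: prod.case split_def fst_conv snd_conv prod_eq_iff if_distrib[of fst] if_distrib[of snd] minus_minus mult_minus_left mult_1 split del: if_split; smt (z3))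
  have 2: "case phi2 (-(-2)) (-(-1)) (((x,y),z),w) of (((X,Y),Z),W) \<Rightarrow> max W (Y+(-2)*Z+2*W) = max z (x+(-2)*y+2*z) + (-2)*w"
    unfolding phi2_def Let_def pos_part_def max_def
      using [[smt_timeout=300]]
      by (simp only: prod.case split_def fst_conv snd_conv prod_eq_iff if_distrib[of fst] if_distrib[of snd] minus_minus mult_minus_left mult_1 split del: if_split; smt (z3))
  show ?thesis using ab 1 2 by auto
qed

lemma core4:
  fixes x y z w a b :: int
  assumes ab: "(a,b) \<in> {(-1,-2),(-2,-1)}"
  shows "case phi2 (-a) (-b) (((x,y),z),w) of (((X,Y),Z),W) \<Rightarrow> max (-Y-a*X) (-W-a*X-2*Y-a*Z) = max (-x) (-z-2*x-a*y)"
proof -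
  obtain X Y Z W where P: "phi2 (-a) (-b) (((x,y),z),w) = (((X,Y),Z),W)" by (metis prod.exhaust)
  have h0: "X+Z = y+w" using core0[OF ab, where x=x and y=y and z=z and w=w] by (simp add: P)
  have h1: "Y+W = x+z" using core1[OF ab, where x=x and y=y and z=z and w=w] by (simp add: P)
  have h5: "max W (Y+a*Z+2*W) = max z (x+a*y+2*z) + a*w" using core5[OF ab, where x=x and y=y and z=z and w=w] by (simp add: P)
  show ?thesis using ab h0 h1 h5 by (auto simp: P max_def split: if_splits)
qed

lemma core6:
  fixes x y z w a b :: int
  assumes ab: "(a,b) \<in> {(-1,-2),(-2,-1)}"
  shows "phi2 (-a) (-b) (if x+a*y+z \<ge> 0 then (((x+1,y),z),w) else (((x,y),z+1),w)) = (case phi2 (-a) (-b) (((x,y),z),w) of (((X,Y),Z),W) \<Rightarrow> (if Y+a*Z+W \<ge> 0 then (((X,Y+1),Z),W) else (((X,Y),Z),W+1)))"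
proof -
  have 1: "phi2 (-(-1)) (-(-2)) (if x+(-1)*y+z \<ge> 0 then (((x+1,y),z),w) else (((x,y),z+1),w)) = (case phi2 (-(-1)) (-(-2)) (((x,y),z),w) of (((X,Y),Z),W) \<Rightarrow> (if Y+(-1)*Z+W \<ge> 0 then (((X,Y+1),Z),W) else (((X,Y),Z),W+1)))"
    unfolding phi2_def Let_def pos_part_def max_def
      using [[smt_timeout=300]]
      by (simp only: prod.case split_def fst_conv snd_conv prod_eq_iff if_distrib[of fst] if_distrib[of snd] minus_minus mult_minus_left mult_1 split del: if_split; smt (z3))
  have 2: "phi2 (-(-2)) (-(-1)) (if x+(-2)*y+z \<ge> 0 then (((x+1,y),z),w) else (((x,y),z+1),w)) = (case phi2 (-(-2)) (-(-1)) (((x,y),z),w) of (((X,Y),Z),W) \<Rightarrow> (if Y+(-2)*Z+W \<ge> 0 then (((X,Y+1),Z),W) else (((X,Y),Z),W+1)))"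
    unfolding phi2_def Let_def pos_part_def max_def
      using [[smt_timeout=300]]
      by (simp only: prod.case split_def fst_conv snd_conv prod_eq_iff if_distrib[of fst] if_distrib[of snd] minus_minus mult_minus_left mult_1 split del: if_split; smt (z3))
  show ?thesis using ab 1 2 by auto
qed

lemma core7:
  fixes x y z w a b :: int
  assumes ab: "(a,b) \<in> {(-1,-2),(-2,-1)}"
  shows "phi2 (-a) (-b) (if x+a*y+z > 0 then (((x-1,y),z),w) else (((x,y),z-1),w)) = (case phi2 (-a) (-b) (((x,y),z),w) of (((X,Y),Z),W) \<Rightarrow> (if Y+a*Z+W > 0 then (((X,Y-1),Z),W) else (((X,Y),Z),W-1)))"
proof -
  have 1: "phi2 (-(-1)) (-(-2)) (if x+(-1)*y+z > 0 then (((x-1,y),z),w) else (((x,y),z-1),w)) = (case phi2 (-(-1)) (-(-2)) (((x,y),z),w) of (((X,Y),Z),W) \<Rightarrow> (if Y+(-1)*Z+W > 0 then (((X,Y-1),Z),W) else (((X,Y),Z),W-1)))"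
    unfolding phi2_def Let_def pos_part_def max_def
      using [[smt_timeout=300]]
      by (simp only: prod.case split_def fst_conv snd_conv prod_eq_iff if_distrib[of fst] if_distrib[of snd] minus_minus mult_minus_left mult_1 split del: if_split; smt (z3))
  have 2: "phi2 (-(-2)) (-(-1)) (if x+(-2)*y+z > 0 then (((x-1,y),z),w) else (((x,y),z-1),w)) = (case phi2 (-(-2)) (-(-1)) (((x,y),z),w) of (((X,Y),Z),W) \<Rightarrow> (if Y+(-2)*Z+W > 0 then (((X,Y-1),Z),W) else (((X,Y),Z),W-1)))"
    unfolding phi2_def Let_def pos_part_def max_def
      using [[smt_timeout=300]]
      by (simp only: prod.case split_def fst_conv snd_conv prod_eq_iff if_distrib[of fst] if_distrib[of snd] minus_minus mult_minus_left mult_1 split del: if_split; smt (z3))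
  show ?thesis using ab 1 2 by auto
qed

lemma core8:
  fixes x y z w a b :: int
  assumes ab: "(a,b) \<in> {(-1,-2),(-2,-1)}"
  shows "phi2 (-a) (-b) (if y+b*z+w \<ge> 0 then (((x,y+1),z),w) else (((x,y),z),w+1)) = (case phi2 (-a) (-b) (((x,y),z),w) of (((X,Y),Z),W) \<Rightarrow> (if X+b*Y+Z \<ge> 0 then (((X+1,Y),Z),W) else (((X,Y),Z+1),W)))"
proof -
  have 1: "phi2 (-(-1)) (-(-2)) (if y+(-2)*z+w \<ge> 0 then (((x,y+1),z),w) else (((x,y),z),w+1)) = (case phi2 (-(-1)) (-(-2)) (((x,y),z),w) of (((X,Y),Z),W) \<Rightarrow> (if X+(-2)*Y+Z \<ge> 0 then (((X+1,Y),Z),W) else (((X,Y),Z+1),W)))"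
    unfolding phi2_def Let_def pos_part_def max_def
      using [[smt_timeout=300]]
      by (simp only: prod.case split_def fst_conv snd_conv prod_eq_iff if_distrib[of fst] if_distrib[of snd] minus_minus mult_minus_left mult_1 split del: if_split; smt (z3))
  have 2: "phi2 (-(-2)) (-(-1)) (if y+(-1)*z+w \<ge> 0 then (((x,y+1),z),w) else (((x,y),z),w+1)) = (case phi2 (-(-2)) (-(-1)) (((x,y),z),w) of (((X,Y),Z),W) \<Rightarrow> (if X+(-1)*Y+Z \<ge> 0 then (((X+1,Y),Z),W) else (((X,Y),Z+1),W)))"
    unfolding phi2_def Let_def pos_part_def max_def
      using [[smt_timeout=300]]
      by (simp only: prod.case split_def fst_conv snd_conv prod_eq_iff if_distrib[of fst] if_distrib[of snd] minus_minus mult_minus_left mult_1 split del: if_split; smt (z3))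
  show ?thesis using ab 1 2 by auto
qed

lemma core9:
  fixes x y z w a b :: int
  assumes ab: "(a,b) \<in> {(-1,-2),(-2,-1)}"
  shows "phi2 (-a) (-b) (if y+b*z+w > 0 then (((x,y-1),z),w) else (((x,y),z),w-1)) = (case phi2 (-a) (-b) (((x,y),z),w) of (((X,Y),Z),W) \<Rightarrow> (if X+b*Y+Z > 0 then (((X-1,Y),Z),W) else (((X,Y),Z-1),W)))"
proof -
  have 1: "phi2 (-(-1)) (-(-2)) (if y+(-2)*z+w > 0 then (((x,y-1),z),w) else (((x,y),z),w-1)) = (case phi2 (-(-1)) (-(-2)) (((x,y),z),w) of (((X,Y),Z),W) \<Rightarrow> (if X+(-2)*Y+Z > 0 then (((X-1,Y),Z),W) else (((X,Y),Z-1),W)))"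
    unfolding phi2_def Let_def pos_part_def max_def
      using [[smt_timeout=300]]
      by (simp only: prod.case split_def fst_conv snd_conv prod_eq_iff if_distrib[of fst] if_distrib[of snd] minus_minus mult_minus_left mult_1 split del: if_split; smt (z3))
  have 2: "phi2 (-(-2)) (-(-1)) (if y+(-1)*z+w > 0 then (((x,y-1),z),w) else (((x,y),z),w-1)) = (case phi2 (-(-2)) (-(-1)) (((x,y),z),w) of (((X,Y),Z),W) \<Rightarrow> (if X+(-1)*Y+Z > 0 then (((X-1,Y),Z),W) else (((X,Y),Z-1),W)))"
    unfolding phi2_def Let_def pos_part_def max_def
      using [[smt_timeout=300]]
      by (simp only: prod.case split_def fst_conv snd_conv prod_eq_iff if_distrib[of fst] if_distrib[of snd] minus_minus mult_minus_left mult_1 split del: if_split; smt (z3))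
  show ?thesis using ab 1 2 by auto
qed

lemma phi2_inv: "(c1,c2) \<in> {(1,2),(2,1)} \<Longrightarrow> phi2 c2 c1 (phi2 c1 c2 v) = v"
  by (cases v) (auto simp: phi2_def pos_part_def Let_def max_def)

lemma main:
  fixes I :: "'i set" and alpha :: "'i \<Rightarrow> 'w::real_vector" and hpair :: "'i \<Rightarrow> 'w \<Rightarrow> real"
    and i j :: 'i and a b :: int
  assumes li: "linear (hpair i)" and lj: "linear (hpair j)" and ij: "i \<noteq> j"
    and Hii: "hpair i (alpha i) = 2" and Hij: "hpair i (alpha j) = of_int a"
    and Hji: "hpair j (alpha i) = of_int b" and Hjj: "hpair j (alpha j) = 2"
    and ab: "(a,b) \<in> {(-1,-2),(-2,-1)}"
  shows "crystal_iso I
           (tensor hpair (tensor hpair (tensor hpair (Bcr alpha i) (Bcr alpha j)) (Bcr alpha i)) (Bcr alpha j))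
           (tensor hpair (tensor hpair (tensor hpair (Bcr alpha j) (Bcr alpha i)) (Bcr alpha j)) (Bcr alpha i))
           (\<lambda>v. Some (phi2 (- a) (- b) v))"
proof -
  note gL = gen[OF li lj ij Hii Hij Hji Hjj]
  note gR = gen[OF lj li ij[symmetric] Hjj Hji Hij Hii]
  let ?L = "tensor hpair (tensor hpair (tensor hpair (Bcr alpha i) (Bcr alpha j)) (Bcr alpha i)) (Bcr alpha j)"
  let ?R = "tensor hpair (tensor hpair (tensor hpair (Bcr alpha j) (Bcr alpha i)) (Bcr alpha j)) (Bcr alpha i)"
  have A: "cwt ?R b' = cwt ?L v \<and> (\<forall>k\<in>I. ceps ?R k b' = ceps ?L k v \<and> cphi ?R k b' = cphi ?L k v)"
    if "Some (phi2 (- a) (- b) v) = Some b'" for v b'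
  proof -
    obtain x y z w where v: "v = (((x,y),z),w)" by (metis prod.exhaust)
    obtain X Y Z W where P: "phi2 (-a) (-b) (((x,y),z),w) = (((X,Y),Z),W)" by (metis prod.exhaust)
    have b': "b' = (((X,Y),Z),W)" using that v P by simp
    have c0: "X+Z = y+w" using core0[OF ab, where x=x and y=y and z=z and w=w] by (simp add: P)
    have c1: "Y+W = x+z" using core1[OF ab, where x=x and y=y and z=z and w=w] by (simp add: P)
    have c2: "max (-X) (-Z-2*X-b*Y) = max (-y-b*x) (-w-b*x-2*y-b*z)"
      using core2[OF ab, where x=x and y=y and z=z and w=w] by (simp add: P)
    have c3: "max Z (X+b*Y+2*Z) + b*W = max w (y+b*z+2*w)"
      using core3[OF ab, where x=x and y=y and z=z and w=w] by (simp add: P)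
    have c4: "max (-Y-a*X) (-W-a*X-2*Y-a*Z) = max (-x) (-z-2*x-a*y)"
      using core4[OF ab, where x=x and y=y and z=z and w=w] by (simp add: P)
    have c5: "max W (Y+a*Z+2*W) = max z (x+a*y+2*z) + a*w"
      using core5[OF ab, where x=x and y=y and z=z and w=w] by (simp add: P)
    have c3r: "real_of_int (max Z (X+b*Y+2*Z)) + real_of_int b * real_of_int W = real_of_int (max w (y+b*z+2*w))"
      using c3 by (metis of_int_add of_int_mult)
    have "cwt ?R b' = cwt ?L v"
      unfolding v b' gL(1) gR(1) by (simp add: c0 c1)
    moreover have "ceps ?R k b' = ceps ?L k v \<and> cphi ?R k b' = cphi ?L k v" for k
    proof -
      consider "k = i" | "k = j" | "k \<noteq> i \<and> k \<noteq> j" by blast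
      then show ?thesis
      proof cases
        case 1
        then show ?thesis unfolding v b' using gL(2,3) gR(6,7) c4 c5 by simp
      next
        case 2
        then show ?thesis unfolding v b' using gL(6,7) gR(2,3) c2 c3r by simp
      next
        case 3
        then show ?thesis using gL(10,11) gR(10,11) by simp
      qed
    qed
    ultimately show ?thesis by blast
  qed
  have B: "Option.bind (ce ?L k v) (\<lambda>v. Some (phi2 (- a) (- b) v)) = Option.bind (Some (phi2 (- a) (- b) v)) (ce ?R k)
     \<and> Option.bind (cf ?L k v) (\<lambda>v. Some (phi2 (- a) (- b) v)) = Option.bind (Some (phi2 (- a) (- b) v)) (cf ?R k)"
    for k v
  proof -
    obtain x y z w where v: "v = (((x,y),z),w)" by (metis prod.exhaust)
    obtain X Y Z W where P: "phi2 (-a) (-b) (((x,y),z),w) = (((X,Y),Z),W)" by (metis prod.exhaust)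
    have c6: "phi2 (-a) (-b) (if x+a*y+z \<ge> 0 then (((x+1,y),z),w) else (((x,y),z+1),w)) = (if Y+a*Z+W \<ge> 0 then (((X,Y+1),Z),W) else (((X,Y),Z),W+1))"
      using core6[OF ab, where x=x and y=y and z=z and w=w] by (simp only: P prod.case)
    have c7: "phi2 (-a) (-b) (if x+a*y+z > 0 then (((x-1,y),z),w) else (((x,y),z-1),w)) = (if Y+a*Z+W > 0 then (((X,Y-1),Z),W) else (((X,Y),Z),W-1))"
      using core7[OF ab, where x=x and y=y and z=z and w=w] by (simp only: P prod.case)
    have c8: "phi2 (-a) (-b) (if y+b*z+w \<ge> 0 then (((x,y+1),z),w) else (((x,y),z),w+1)) = (if X+b*Y+Z \<ge> 0 then (((X+1,Y),Z),W) else (((X,Y),Z+1),W))"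
      using core8[OF ab, where x=x and y=y and z=z and w=w] by (simp only: P prod.case)
    have c9: "phi2 (-a) (-b) (if y+b*z+w > 0 then (((x,y-1),z),w) else (((x,y),z),w-1)) = (if X+b*Y+Z > 0 then (((X-1,Y),Z),W) else (((X,Y),Z-1),W))"
      using core9[OF ab, where x=x and y=y and z=z and w=w] by (simp only: P prod.case)
    consider "k = i" | "k = j" | "k \<noteq> i \<and> k \<noteq> j" by blast
    then show ?thesis
    proof cases
      case 1
      show ?thesis unfolding 1 v P gL(4,5) gR(8,9) Option.bind_lunit c6 c7 by simp
    next
      case 2
      show ?thesis unfolding 2 v P gL(8,9) gR(4,5) Option.bind_lunit c8 c9 by simp
    next
      case 3
      then show ?thesis using gL(12,13) gR(12,13) by simp
    qed
  qed
  have inv1: "phi2 (-b) (-a) (phi2 (-a) (-b) v) = v" for v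
    using phi2_inv[of "-a" "-b" v] ab by auto
  have inv2: "phi2 (-a) (-b) (phi2 (-b) (-a) v) = v" for v
    using phi2_inv[of "-b" "-a" v] ab by auto
  have C: "bij (\<lambda>x. case x of None \<Rightarrow> None | Some v \<Rightarrow> Some (phi2 (- a) (- b) v))"
    apply (rule o_bij[where g = "\<lambda>x. case x of None \<Rightarrow> None | Some v \<Rightarrow> Some (phi2 (- b) (- a) v)"])
     apply (rule ext, simp only: comp_def id_def)
     subgoal for x by (cases x) (simp_all only: option.case inv1)
    apply (rule ext, simp only: comp_def id_def)
    subgoal for x by (cases x) (simp_all only: option.case inv2)
    done
  show ?thesis
    unfolding crystal_iso_def strict_morphism_def
    using A B C by blast
qed

theorem proposition4p1:
  fixes I :: "'i set" and A :: "'i \<Rightarrow> 'i \<Rightarrow> int"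
    and alpha :: "'i \<Rightarrow> 'w::real_vector" and hpair :: "'i \<Rightarrow> 'w \<Rightarrow> real"
    and i j :: 'i
  assumes "km_datum I A alpha hpair"
    and "i \<in> I" and "j \<in> I"
    and "(- A i j) * (- A j i) = 2"
  shows "crystal_iso I
           (tensor hpair (tensor hpair (tensor hpair (Bcr alpha i) (Bcr alpha j)) (Bcr alpha i)) (Bcr alpha j))
           (tensor hpair (tensor hpair (tensor hpair (Bcr alpha j) (Bcr alpha i)) (Bcr alpha j)) (Bcr alpha i))
           (\<lambda>b. Some (phi2 (- A i j) (- A j i) b))"
proof -
  from assms(1) have K: "\<forall>k\<in>I. A k k = 2" "\<forall>k\<in>I. \<forall>l\<in>I. k \<noteq> l \<longrightarrow> A k l \<le> 0"
    "\<forall>k\<in>I. linear (hpair k)" "\<forall>k\<in>I. \<forall>l\<in>I. hpair k (alpha l) = of_int (A k l)"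
    unfolding km_datum_def by blast+
  have Aii: "A i i = 2" "A j j = 2" using K(1) assms(2,3) by auto
  have ij: "i \<noteq> j"
  proof
    assume "i = j"
    then show False using assms(4) Aii by simp
  qed
  have neg: "A i j \<le> 0" "A j i \<le> 0" using K(2) assms(2,3) ij by auto
  have prod: "A i j * A j i = 2" using assms(4) by simp
  have nz: "A i j \<noteq> 0" "A j i \<noteq> 0" using prod by auto
  have ge1: "- A i j \<ge> 1" "- A j i \<ge> 1" using neg nz by auto
  have "(- A i j) * 1 \<le> (- A i j) * (- A j i)" by (rule mult_left_mono) (use ge1 in auto)
  then have le2a: "- A i j \<le> 2" using prod by simp
  have "(- A j i) * 1 \<le> (- A j i) * (- A i j)" by (rule mult_left_mono) (use ge1 in auto)
  then have le2b: "- A j i \<le> 2" using prod by (simp add: mult.commute)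
  have ca: "A i j = -1 \<or> A i j = -2" using ge1 le2a by arith
  have cb: "A j i = -1 \<or> A j i = -2" using ge1 le2b by arith
  have ab: "(A i j, A j i) \<in> {(-1,-2),(-2,-1)}" using ca cb prod by auto
  have H: "hpair i (alpha i) = 2" "hpair i (alpha j) = of_int (A i j)"
    "hpair j (alpha i) = of_int (A j i)" "hpair j (alpha j) = 2"
    using K(4) assms(2,3) Aii by auto
  show ?thesis
    by (rule main[OF _ _ ij H ab]) (use K(3) assms(2,3) in auto)
qed

end
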